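(* If $X,Y$ are metric spaces with $|X|,|Y|\le2$, then $d_{\mathrm{GH}}(X,Y)=\widehat{d}_{\mathrm{GH}}(X,Y)$.
   Context: For $f:X\to Y$, $\operatorname{dis}(f)=\sup_{x,x'}|d_X(x,x')-d_Y(f(x),f(x'))|$; $\operatorname{codis}(f,g)=\sup_{x,y}|d_X(x,g(y))-d_Y(f(x),y)|$. $d_{\mathrm{GH}}$ is the Gromov--Hausdorff distance, equal to $\frac12\inf_{f,g}\max\{\operatorname{dis}(f),\operatorname{dis}(g),\operatorname{codis}(f,g)\}$; $\widehat{d}_{\mathrm{GH}}(X,Y)=\frac12\max\{\inf_{f:X\to Y}\operatorname{dis}(f),\inf_{g:Y\to X}\operatorname{dis}(g)\}$. *)

theory Defs
  imports "HOL-Analysis.Analysis" "HOL-Library.FuncSet"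
begin

definition metric_on :: "'a set \<Rightarrow> ('a \<Rightarrow> 'a \<Rightarrow> real) \<Rightarrow> bool" where
  "metric_on X d \<longleftrightarrow>
     (\<forall>x\<in>X. \<forall>y\<in>X. 0 \<le> d x y) \<and>
     (\<forall>x\<in>X. \<forall>y\<in>X. d x y = 0 \<longleftrightarrow> x = y) \<and>
     (\<forall>x\<in>X. \<forall>y\<in>X. d x y = d y x) \<and>
     (\<forall>x\<in>X. \<forall>y\<in>X. \<forall>z\<in>X. d x z \<le> d x y + d y z)"

definition dis :: "'a set \<Rightarrow> ('a \<Rightarrow> 'a \<Rightarrow> real) \<Rightarrow> ('b \<Rightarrow> 'b \<Rightarrow> real) \<Rightarrow> ('a \<Rightarrow> 'b) \<Rightarrow> real" where
  "dis X dX dY f = (SUP p\<in>X \<times> X. \<bar>dX (fst p) (snd p) - dY (f (fst p)) (f (snd p))\<bar>)"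

definition codis :: "'a set \<Rightarrow> ('a \<Rightarrow> 'a \<Rightarrow> real) \<Rightarrow> 'b set \<Rightarrow> ('b \<Rightarrow> 'b \<Rightarrow> real)
    \<Rightarrow> ('a \<Rightarrow> 'b) \<Rightarrow> ('b \<Rightarrow> 'a) \<Rightarrow> real" where
  "codis X dX Y dY f g = (SUP p\<in>X \<times> Y. \<bar>dX (fst p) (g (snd p)) - dY (f (fst p)) (snd p)\<bar>)"

definition dGH :: "'a set \<Rightarrow> ('a \<Rightarrow> 'a \<Rightarrow> real) \<Rightarrow> 'b set \<Rightarrow> ('b \<Rightarrow> 'b \<Rightarrow> real) \<Rightarrow> real" where
  "dGH X dX Y dY = (1/2) *
     (INF fg\<in>(X \<rightarrow>\<^sub>E Y) \<times> (Y \<rightarrow>\<^sub>E X).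
        max (dis X dX dY (fst fg)) (max (dis Y dY dX (snd fg)) (codis X dX Y dY (fst fg) (snd fg))))"

definition dGH_hat :: "'a set \<Rightarrow> ('a \<Rightarrow> 'a \<Rightarrow> real) \<Rightarrow> 'b set \<Rightarrow> ('b \<Rightarrow> 'b \<Rightarrow> real) \<Rightarrow> real" where
  "dGH_hat X dX Y dY = (1/2) *
     max (INF f\<in>(X \<rightarrow>\<^sub>E Y). dis X dX dY f) (INF g\<in>(Y \<rightarrow>\<^sub>E X). dis Y dY dX g)"

end

theory Submission
  imports Defs
begin

lemma dis_le:
  assumes "X \<noteq> {}" "\<And>p q. p\<in>X \<Longrightarrow> q\<in>X \<Longrightarrow> \<bar>dX p q - dY (f p) (f q)\<bar> \<le> c"
  shows "dis X dX dY f \<le> c"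
  unfolding dis_def using assms by (intro cSUP_least) auto

lemma dis_ge:
  assumes "finite X" "p\<in>X" "q\<in>X"
  shows "\<bar>dX p q - dY (f p) (f q)\<bar> \<le> dis X dX dY f"
proof -
  have "bdd_above ((\<lambda>p. \<bar>dX (fst p) (snd p) - dY (f (fst p)) (f (snd p))\<bar>) ` (X \<times> X))"
    using assms by (intro bdd_above_finite) auto
  then have "(\<lambda>p. \<bar>dX (fst p) (snd p) - dY (f (fst p)) (f (snd p))\<bar>) (p,q) \<le> dis X dX dY f"
    unfolding dis_def using assms by (intro cSUP_upper) auto
  then show ?thesis by simp
qed

lemma codis_le:
  assumes "X \<noteq> {}" "Y \<noteq> {}" "\<And>p q. p\<in>X \<Longrightarrow> q\<in>Y \<Longrightarrow> \<bar>dX p (g q) - dY (f p) q\<bar> \<le> c"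
  shows "codis X dX Y dY f g \<le> c"
  unfolding codis_def using assms by (intro cSUP_least) auto

lemma two_elems:
  assumes "finite X" "X \<noteq> {}" "card X \<le> 2"
  shows "\<exists>a b. X = {a,b}"
proof -
  have "card X = 1 \<or> card X = 2" proof -
    have "card X \<noteq> 0" using assms by simp
    then show ?thesis using assms(3) by linarith
  qed
  then show ?thesis
  proof
    assume "card X = 1" then obtain a where "X = {a}" by (metis card_1_singletonE)
    then show ?thesis by blast
  next
    assume "card X = 2" then show ?thesis by (metis card_2_iff)
  qed
qed

lemma dis_lower:
  assumes mX: "metric_on X dX" and mY: "metric_on Y dY"
    and X: "X = {x1,x2}" and Y: "Y = {y1,y2}" and f: "f \<in> X \<rightarrow>\<^sub>E Y"
  shows "min (dX x1 x2) \<bar>dX x1 x2 - dY y1 y2\<bar> \<le> dis X dX dY f"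
proof -
  have fin: "finite X" using X by simp
  have x1X: "x1 \<in> X" and x2X: "x2 \<in> X" using X by blast+
  have f1: "f x1 \<in> Y" and f2: "f x2 \<in> Y" using f x1X x2X by blast+
  have h: "\<bar>dX x1 x2 - dY (f x1) (f x2)\<bar> \<le> dis X dX dY f"
    by (rule dis_ge[OF fin x1X x2X])
  have z: "\<forall>x\<in>Y. \<forall>y\<in>Y. dY x y = 0 \<longleftrightarrow> x = y" and s0: "\<forall>x\<in>Y. \<forall>y\<in>Y. dY x y = dY y x"
    using mY unfolding metric_on_def by blast+
  have y1Y: "y1 \<in> Y" and y2Y: "y2 \<in> Y" using Y by blast+
  have s: "dY y2 y1 = dY y1 y2" using s0 y1Y y2Y by blast
  show ?thesis
  proof (cases "f x1 = f x2")
    case True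
    then have "dY (f x1) (f x2) = 0" using z f1 by simp
    then show ?thesis using h by linarith
  next
    case False
    have "f x1 = y1 \<or> f x1 = y2" "f x2 = y1 \<or> f x2 = y2" using f1 f2 Y by blast+
    then have "dY (f x1) (f x2) = dY y1 y2" using False s by auto
    then show ?thesis using h by linarith
  qed
qed

theorem claim4:
  fixes X :: "'a set" and dX :: "'a \<Rightarrow> 'a \<Rightarrow> real"
    and Y :: "'b set" and dY :: "'b \<Rightarrow> 'b \<Rightarrow> real"
  assumes "metric_on X dX" and "metric_on Y dY"
    and "X \<noteq> {}" and "Y \<noteq> {}"
    and "finite X" and "card X \<le> 2"
    and "finite Y" and "card Y \<le> 2"
  shows "dGH X dX Y dY = dGH_hat X dX Y dY"
proof -
  obtain x1 x2 where X: "X = {x1,x2}" using two_elems[OF assms(5,3,6)] by blast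
  obtain y1 y2 where Y: "Y = {y1,y2}" using two_elems[OF assms(7,4,8)] by blast
  define a where "a = dX x1 x2"
  define b where "b = dY y1 y2"
  have x1X: "x1 \<in> X" and x2X: "x2 \<in> X" and y1Y: "y1 \<in> Y" and y2Y: "y2 \<in> Y" by (simp_all add: X Y)
  note mXa = assms(1)[unfolded metric_on_def]
  note mYa = assms(2)[unfolded metric_on_def]
  note mX = mXa[THEN conjunct1] mXa[THEN conjunct2, THEN conjunct1] mXa[THEN conjunct2, THEN conjunct2, THEN conjunct1]
  note mY = mYa[THEN conjunct1] mYa[THEN conjunct2, THEN conjunct1] mYa[THEN conjunct2, THEN conjunct2, THEN conjunct1]
  have a0: "a \<ge> 0" by (simp add: mX(1) x1X x2X a_def)
  have b0: "b \<ge> 0" by (simp add: mY(1) y1Y y2Y b_def)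
  have xx: "dX x1 x1 = 0" "dX x2 x2 = 0" "dX x2 x1 = a" by (simp_all add: mX(2,3) x1X x2X a_def)
  have yy: "dY y1 y1 = 0" "dY y2 y2 = 0" "dY y2 y1 = b" by (simp_all add: mY(2,3) y1Y y2Y b_def)
  have x12: "x1 = x2 \<Longrightarrow> a = 0" using xx a_def by simp
  have y12: "y1 = y2 \<Longrightarrow> b = 0" using yy b_def by simp
  have ad: "dX x1 x2 = a" and bd: "dY y1 y2 = b" by (simp_all add: a_def b_def)
  have pX: "\<And>p. p \<in> X \<Longrightarrow> p = x1 \<or> p = x2" using X by simp
  have pY: "\<And>p. p \<in> Y \<Longrightarrow> p = y1 \<or> p = y2" using Y by simp
  let ?F = "X \<rightarrow>\<^sub>E Y" and ?G = "Y \<rightarrow>\<^sub>E X"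
  let ?h = "\<lambda>fg. max (dis X dX dY (fst fg)) (max (dis Y dY dX (snd fg)) (codis X dX Y dY (fst fg) (snd fg)))"
  have finF: "finite ?F" and finG: "finite ?G" using assms(5,7) by (simp_all add: finite_PiE)
  have neF: "?F \<noteq> {}" and neG: "?G \<noteq> {}" using assms(3,4) by (simp_all add: PiE_eq_empty_iff)
  define f where "f = restrict (\<lambda>x. if x = x1 then y1 else y2) X"
  define g where "g = restrict (\<lambda>y. if y = y1 then x1 else x2) Y"
  have fF: "f \<in> ?F" unfolding f_def using X Y by auto
  have gG: "g \<in> ?G" unfolding g_def using X Y by auto
  have disf: "dis X dX dY f \<le> \<bar>a - b\<bar>"
    apply (rule dis_le[OF assms(3)])
    subgoal for p q
      apply (drule pX, drule pX)
      using xx yy ad bd x12 y12 a0 b0 x1X x2X unfolding f_def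
      by (cases "x1 = x2"; cases "y1 = y2"; elim disjE; simp add: abs_minus_commute)
    done
  have disg: "dis Y dY dX g \<le> \<bar>a - b\<bar>"
    apply (rule dis_le[OF assms(4)])
    subgoal for p q
      apply (drule pY, drule pY)
      using xx yy ad bd x12 y12 a0 b0 y1Y y2Y unfolding g_def
      by (cases "x1 = x2"; cases "y1 = y2"; elim disjE; simp add: abs_minus_commute)
    done
  have codisfg: "codis X dX Y dY f g \<le> \<bar>a - b\<bar>"
    apply (rule codis_le[OF assms(3,4)])
    subgoal for p q
      apply (drule pX, drule pY)
      using xx yy ad bd x12 y12 a0 b0 x1X x2X y1Y y2Y unfolding f_def g_def
      by (cases "x1 = x2"; cases "y1 = y2"; elim disjE; simp add: abs_minus_commute)
    done
  have up: "(INF fg\<in>?F \<times> ?G. ?h fg) \<le> \<bar>a - b\<bar>"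
  proof -
    have "bdd_below (?h ` (?F \<times> ?G))" using finF finG by (intro bdd_below_finite) auto
    then have "(INF fg\<in>?F \<times> ?G. ?h fg) \<le> ?h (f,g)" using fF gG by (intro cINF_lower) auto
    also have "\<dots> \<le> \<bar>a - b\<bar>" using disf disg codisfg by simp
    finally show ?thesis .
  qed
  have lf: "min a \<bar>a - b\<bar> \<le> (INF f\<in>?F. dis X dX dY f)"
    using neF dis_lower[OF assms(1,2) X Y] a_def b_def by (intro cINF_greatest) auto
  have "min b \<bar>b - a\<bar> \<le> (INF g\<in>?G. dis Y dY dX g)"
    using neG dis_lower[OF assms(2,1) Y X] a_def b_def xx by (intro cINF_greatest) auto
  then have lg: "min b \<bar>a - b\<bar> \<le> (INF g\<in>?G. dis Y dY dX g)" by (simp add: abs_minus_commute)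
  have lo: "max (INF f\<in>?F. dis X dX dY f) (INF g\<in>?G. dis Y dY dX g)
        \<le> (INF fg\<in>?F \<times> ?G. ?h fg)"
  proof (rule cINF_greatest)
    show "?F \<times> ?G \<noteq> {}" using neF neG by auto
  next
    fix fg assume fg: "fg \<in> ?F \<times> ?G"
    have "(INF f\<in>?F. dis X dX dY f) \<le> dis X dX dY (fst fg)"
      using fg finF by (intro cINF_lower bdd_below_finite) auto
    moreover have "(INF g\<in>?G. dis Y dY dX g) \<le> dis Y dY dX (snd fg)"
      using fg finG by (intro cINF_lower bdd_below_finite) auto
    ultimately show "max (INF f\<in>?F. dis X dX dY f) (INF g\<in>?G. dis Y dY dX g) \<le> ?h fg"
      by linarith
  qed
  have "\<bar>a - b\<bar> \<le> max (INF f\<in>?F. dis X dX dY f) (INF g\<in>?G. dis Y dY dX g)"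
    using lf lg a0 b0 by linarith
  then show ?thesis unfolding dGH_def dGH_hat_def using up lo by linarith
qed

end
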